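(* Let $V=\{\mathbf{v}_1,\dots,\mathbf{v}_m\}$ and $\tilde V=\{\tilde{\mathbf{v}}_1,\dots,\tilde{\mathbf{v}}_m\}$ be subsets of $\mathbb{R}^\ell$ whose open convex hulls are given by $\mathrm{Co}(V)=\{\mathbf{x}:A\mathbf{x}\prec\mathbf{b}\}$ and $\mathrm{Co}(\tilde V)=\{\mathbf{x}:\tilde A\mathbf{x}\prec\tilde{\mathbf{b}}\}$, where the rows of $A$ and $\tilde A$ are unit vectors. Let $\varepsilon>0$. If $\mathbf{x}\in\mathbb{R}^\ell$ satisfies $A\mathbf{x}\prec\mathbf{b}-\varepsilon\mathbf{1}$ and $\|\mathbf{v}_i-\tilde{\mathbf{v}}_i\|_2<\varepsilon$ for all $i$, then $\tilde A\mathbf{x}\prec\tilde{\mathbf{b}}$.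
   Context: $\prec$ denotes strict entrywise inequality of vectors and $\mathbf{1}$ the all-ones vector of the appropriate size. $\mathrm{Co}(S)$ denotes the open convex hull (interior of the convex hull) of $S$. *)

theory Defs
  imports "HOL-Analysis.Analysis"
begin

end

theory Submission
  imports Defs
begin

lemma mv_inner: "(M *v y) $ j = inner (M $ j) (y :: real ^ 'n)"
  by (simp add: matrix_vector_mult_def inner_vec_def)

theorem lemma12:
  fixes v vt :: "nat \<Rightarrow> real ^ 'l" and m :: nat
    and A :: "real ^ 'l ^ 'k" and b :: "real ^ 'k"
    and At :: "real ^ 'l ^ 'r" and bt :: "real ^ 'r"
    and \<epsilon> :: real and x :: "real ^ 'l"
  assumes hullV: "interior (convex hull (v ` {..<m})) = {y. \<forall>j. (A *v y) $ j < b $ j}"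
    and hullVt: "interior (convex hull (vt ` {..<m})) = {y. \<forall>j. (At *v y) $ j < bt $ j}"
    and rowsA: "\<forall>j. norm (A $ j) = 1"
    and rowsAt: "\<forall>j. norm (At $ j) = 1"
    and eps: "\<epsilon> > 0"
    and hx: "\<forall>j. (A *v x) $ j < b $ j - \<epsilon>"
    and close: "\<forall>i<m. norm (v i - vt i) < \<epsilon>"
  shows "\<forall>j. (At *v x) $ j < bt $ j"
proof -
  let ?C = "convex hull (vt ` {..<m})"
  have cb: "cball x \<epsilon> \<subseteq> convex hull (v ` {..<m})"
  proof
    fix y assume y: "y \<in> cball x \<epsilon>"
    have "\<forall>j. (A *v y) $ j < b $ j"
    proof
      fix j
      have "inner (A $ j) (y - x) \<le> norm (A $ j) * norm (y - x)"
        by (rule norm_cauchy_schwarz)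
      also have "\<dots> \<le> \<epsilon>" using rowsA y by (simp add: dist_norm norm_minus_commute)
      finally have "inner (A $ j) y \<le> inner (A $ j) x + \<epsilon>" by (simp add: inner_diff_right)
      then show "(A *v y) $ j < b $ j" using hx by (simp add: mv_inner) (smt (verit) hx mv_inner)
    qed
    then have "y \<in> interior (convex hull (v ` {..<m}))" using hullV by simp
    then show "y \<in> convex hull (v ` {..<m})" using interior_subset by blast
  qed
  have m0: "m > 0"
  proof (rule ccontr)
    assume "\<not> m > 0"
    then have "convex hull (v ` {..<m}) = {}" by simp
    with cb eps show False by auto
  qed
  define D where "D = Max ((\<lambda>i. norm (v i - vt i)) ` {..<m})"
  have Dlt: "D < \<epsilon>" unfolding D_def using m0 close
    by (subst Max_less_iff) auto
  have Dge: "norm (v i - vt i) \<le> D" if "i < m" for i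
    unfolding D_def using that by (intro Max_ge) auto
  have "x \<in> interior ?C"
  proof (rule ccontr)
    assume nx: "x \<notin> interior ?C"
    have "\<not> ball x (\<epsilon> - D) \<subseteq> ?C"
      using nx Dlt by (meson diff_gt_0_iff_gt mem_interior)
    then obtain z where z: "dist x z < \<epsilon> - D" "z \<notin> ?C" by (auto simp: subset_eq)
    have "convex ?C" "closed ?C"
      by (auto intro: compact_imp_closed finite_imp_compact_convex_hull)
    from separating_hyperplane_closed_point[OF this z(2)]
    obtain a c where ac: "inner a z < c" "\<forall>y\<in>?C. inner a y > c" by blast
    have a0: "a \<noteq> 0"
    proof
      assume "a = 0"
      with ac have "0 < c" "\<forall>y\<in>?C. 0 > c" by auto
      moreover have "vt 0 \<in> ?C" using m0 by (intro hull_inc) auto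
      ultimately show False by auto
    qed
    define u where "u = - a /\<^sub>R norm a"
    have nu: "norm u = 1" using a0 by (simp add: u_def)
    have ut: "inner u (vt i) < inner u z" if "i < m" for i
    proof -
      have "vt i \<in> ?C" using that by (intro hull_inc) auto
      with ac have "inner a z < inner a (vt i)" by auto
      then show ?thesis using a0 by (simp add: u_def divide_strict_right_mono)
    qed
    have uv: "inner u (v i) < inner u x + \<epsilon>" if "i < m" for i
    proof -
      have "inner u (v i - vt i) \<le> norm u * norm (v i - vt i)" by (rule norm_cauchy_schwarz)
      then have "inner u (v i - vt i) \<le> D" using Dge[OF that] nu by simp
      moreover have "inner u (z - x) \<le> norm u * norm (z - x)" by (rule norm_cauchy_schwarz)
      then have "inner u (z - x) < \<epsilon> - D" using z(1) nu by (simp add: dist_norm norm_minus_commute)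
      ultimately show ?thesis using ut[OF that] by (simp add: inner_diff_right)
    qed
    have "convex hull (v ` {..<m}) \<subseteq> {y. inner u y < inner u x + \<epsilon>}"
      by (rule hull_minimal) (use uv convex_halfspace_lt in auto)
    moreover have "x + \<epsilon> *\<^sub>R u \<in> cball x \<epsilon>" using nu eps by (simp add: dist_norm)
    ultimately have "inner u (x + \<epsilon> *\<^sub>R u) < inner u x + \<epsilon>" using cb by blast
    moreover have "inner u u = 1" using nu by (simp add: dot_square_norm)
    ultimately show False by (simp add: inner_add_right)
  qed
  then show ?thesis using hullVt by simp
qed

end
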